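(* Suppose the collective choice problem $\mathcal C$ satisfies Generic Finite Alternatives. For every $x^0\in X$ and integers $T'>T\ge 1$, \[U_{T'}(x^0)\ge U_T(x^0)\ge U_\infty(x^0).\] Moreover, exactly one of the following holds: (a) there exists $x^0\in X$ such that $U_T(x^0)>U_1(x^0)>U_\infty(x^0)$ for all $T\ge 2$; (b) for all $x^0\in X$ and all $T\ge 2$, $U_T(x^0)=U_1(x^0)=U_\infty(x^0)$.
   Context: Voters $N=\{1,\dots,n\}$ ($n$ odd) and a non-voting agenda setter $A$ choose from a finite policy space $X$; all players have strict (antisymmetric) complete transitive preferences $\succsim_i$ with utilities $u_i$ (Generic Finite Alternatives). $x\succ_M y$: a strict majority of voters strictly prefer $x$ to $y$. $M(x)=\{y: y\succ_M x\text{ or } y=x\}$; $\{\phi(x)\}=\arg\max_{y\in M(x)}u_A(y)$. In the amendment procedure with $T$ rounds (each round the agenda setter proposes a policy voted against the current default by simple majority; passed proposals become the default; the final default is implemented; equilibrium = subgame perfect with as-if-pivotal voting) the implemented policy is unique, equal to $\phi^T(x^0)$, and $U_T(x^0)=u_A(\phi^T(x^0))$ is the agenda setter's equilibrium payoff. A set $Y\subseteq X$ is stable if no distinct $x,y\in Y$ satisfy $y\succ_M x$ and $y\succ_A x$, and every $x\notin Y$ has some $y\in Y$ with $y\succ_M x$ and $y\succ_A x$; in this setting there is a unique stable set $V$. Let $\{\psi(x;V)\}=\arg\max_{y\in M(x)\cap V}u_A(y)$ and $U_\infty(x^0)=u_A(\psi(x^0;V))$; this is the agenda setter's payoff in the infinite-horizon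 game (no deadline; bargaining ends when the agenda setter proposes the current default or a proposal is rejected; the policy at termination is implemented; non-termination is worst for all; solution concept: pure-strategy Markov perfect equilibrium with as-if-pivotal voting). *)

theory Defs
  imports Complex_Main
begin

text \<open>Voters are 1..n, with utilities u i :: 'x \<Rightarrow> real; the agenda setter has utility uA.
  Policy space X is a finite set of alternatives.\<close>

definition maj_pref :: "nat \<Rightarrow> (nat \<Rightarrow> 'x \<Rightarrow> real) \<Rightarrow> 'x \<Rightarrow> 'x \<Rightarrow> bool" where
  "maj_pref n u y x \<longleftrightarrow> 2 * card {i \<in> {1..n}. u i y > u i x} > n"

definition Mset :: "'x set \<Rightarrow> nat \<Rightarrow> (nat \<Rightarrow> 'x \<Rightarrow> real) \<Rightarrow> 'x \<Rightarrow> 'x set" where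
  "Mset X n u x = {y \<in> X. maj_pref n u y x \<or> y = x}"

definition phi :: "'x set \<Rightarrow> nat \<Rightarrow> (nat \<Rightarrow> 'x \<Rightarrow> real) \<Rightarrow> ('x \<Rightarrow> real) \<Rightarrow> 'x \<Rightarrow> 'x" where
  "phi X n u uA x = (THE y. y \<in> Mset X n u x \<and> (\<forall>z \<in> Mset X n u x. uA z \<le> uA y))"

definition U_T :: "'x set \<Rightarrow> nat \<Rightarrow> (nat \<Rightarrow> 'x \<Rightarrow> real) \<Rightarrow> ('x \<Rightarrow> real) \<Rightarrow> nat \<Rightarrow> 'x \<Rightarrow> real" where
  "U_T X n u uA T x0 = uA ((phi X n u uA ^^ T) x0)"

definition stable :: "'x set \<Rightarrow> nat \<Rightarrow> (nat \<Rightarrow> 'x \<Rightarrow> real) \<Rightarrow> ('x \<Rightarrow> real) \<Rightarrow> 'x set \<Rightarrow> bool" where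
  "stable X n u uA Y \<longleftrightarrow> Y \<subseteq> X
     \<and> (\<forall>x \<in> Y. \<forall>y \<in> Y. x \<noteq> y \<longrightarrow> \<not> (maj_pref n u y x \<and> uA y > uA x))
     \<and> (\<forall>x \<in> X - Y. \<exists>y \<in> Y. maj_pref n u y x \<and> uA y > uA x)"

definition stable_set :: "'x set \<Rightarrow> nat \<Rightarrow> (nat \<Rightarrow> 'x \<Rightarrow> real) \<Rightarrow> ('x \<Rightarrow> real) \<Rightarrow> 'x set" where
  "stable_set X n u uA = (THE Y. stable X n u uA Y)"

definition psi :: "'x set \<Rightarrow> nat \<Rightarrow> (nat \<Rightarrow> 'x \<Rightarrow> real) \<Rightarrow> ('x \<Rightarrow> real) \<Rightarrow> 'x set \<Rightarrow> 'x \<Rightarrow> 'x" where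
  "psi X n u uA V x = (THE y. y \<in> Mset X n u x \<inter> V \<and> (\<forall>z \<in> Mset X n u x \<inter> V. uA z \<le> uA y))"

definition U_inf :: "'x set \<Rightarrow> nat \<Rightarrow> (nat \<Rightarrow> 'x \<Rightarrow> real) \<Rightarrow> ('x \<Rightarrow> real) \<Rightarrow> 'x \<Rightarrow> real" where
  "U_inf X n u uA x0 = uA (psi X n u uA (stable_set X n u uA) x0)"

end

theory Submission
  imports Defs
begin

lemma argmax_ex1:
  fixes uA :: "'x \<Rightarrow> real"
  assumes "finite S" "S \<noteq> {}" "inj_on uA S"
  shows "\<exists>!y. y \<in> S \<and> (\<forall>z\<in>S. uA z \<le> uA y)"
proof -
  have "Max (uA ` S) \<in> uA ` S" using assms by simp
  then obtain m where m: "m \<in> S" "uA m = Max (uA ` S)" by auto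
  have mx: "\<forall>z\<in>S. uA z \<le> uA m" using m assms by simp
  show ?thesis
  proof (rule ex1I[of _ m])
    show "m \<in> S \<and> (\<forall>z\<in>S. uA z \<le> uA m)" using m mx by simp
  next
    fix y assume "y \<in> S \<and> (\<forall>z\<in>S. uA z \<le> uA y)"
    then have ys: "y \<in> S" "\<forall>z\<in>S. uA z \<le> uA y" by auto
    have "uA y \<le> uA m" using mx ys by blast
    moreover have "uA m \<le> uA y" using ys m by blast
    ultimately have "uA y = uA m" by simp
    then show "y = m" using assms(3) m(1) ys(1) by (auto dest: inj_onD)
  qed
qed

lemma Mset_sub: "Mset X n u x \<subseteq> X" unfolding Mset_def by auto
lemma Mset_self: "x \<in> X \<Longrightarrow> x \<in> Mset X n u x" unfolding Mset_def by auto

lemma phi_props: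
  assumes "finite X" "inj_on uA X" "x \<in> X"
  shows "phi X n u uA x \<in> Mset X n u x \<and> (\<forall>z\<in>Mset X n u x. uA z \<le> uA (phi X n u uA x))"
proof -
  have "\<exists>!y. y \<in> Mset X n u x \<and> (\<forall>z\<in>Mset X n u x. uA z \<le> uA y)"
    apply (rule argmax_ex1)
    using assms Mset_sub[of X n u x] Mset_self[of x X n u]
    by (auto intro: finite_subset inj_on_subset)
  then show ?thesis unfolding phi_def by (rule theI')
qed

lemma psi_props:
  assumes "finite X" "inj_on uA X" "x \<in> X" "stable X n u uA V"
  shows "psi X n u uA V x \<in> Mset X n u x \<inter> V \<and> (\<forall>z\<in>Mset X n u x \<inter> V. uA z \<le> uA (psi X n u uA V x))"
proof -
  have "Mset X n u x \<inter> V \<noteq> {}"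
  proof (cases "x \<in> V")
    case True then show ?thesis using Mset_self[of x X n u] assms by auto
  next
    case False
    have "x \<in> X - V" using False assms(3) by blast
    then have "\<exists>y\<in>V. maj_pref n u y x \<and> uA x < uA y" using assms(4) unfolding stable_def by blast
    then obtain y where "y \<in> V" "maj_pref n u y x" by blast
    then have "y \<in> Mset X n u x \<inter> V" using assms unfolding Mset_def stable_def by auto
    then show ?thesis by auto
  qed
  then have "\<exists>!y. y \<in> Mset X n u x \<inter> V \<and> (\<forall>z\<in>Mset X n u x \<inter> V. uA z \<le> uA y)"
    apply (intro argmax_ex1)
    using assms Mset_sub[of X n u x]
    by (auto intro: finite_subset inj_on_subset)
  then show ?thesis unfolding psi_def by (rule theI')
qed

lemma stable_exists:
  fixes uA :: "'x \<Rightarrow> real"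
  assumes "finite S" "inj_on uA S"
  shows "\<exists>Y. stable S n u uA Y"
  using assms
proof (induction "card S" arbitrary: S rule: less_induct)
  case less
  show ?case
  proof (cases "S = {}")
    case True
    then show ?thesis unfolding stable_def by auto
  next
    case False
    have "Min (uA ` S) \<in> uA ` S" using less False by simp
    then obtain m where m: "m \<in> S" "uA m = Min (uA ` S)" by auto
    have mn: "\<forall>z\<in>S. z \<noteq> m \<longrightarrow> uA m < uA z"
    proof (intro ballI impI)
      fix z assume z: "z \<in> S" "z \<noteq> m"
      have "uA m \<le> uA z" using m z less by simp
      moreover have "uA m \<noteq> uA z" using z m less(3) by (auto dest: inj_onD)
      ultimately show "uA m < uA z" by simp
    qed
    let ?S = "S - {m}"
    have "card S > 0" using m less card_gt_0_iff by blast
    then have "card ?S < card S" using m less by simp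
    moreover have "finite ?S" "inj_on uA ?S" using less by (auto intro: inj_on_subset)
    ultimately obtain Y' where Y': "stable ?S n u uA Y'" using less by blast
    show ?thesis
    proof (cases "\<exists>y\<in>Y'. maj_pref n u y m \<and> uA y > uA m")
      case True
      have "stable S n u uA Y'"
        using Y' True unfolding stable_def by auto
      then show ?thesis by blast
    next
      case False
      have "stable S n u uA (insert m Y')"
        unfolding stable_def
      proof (intro conjI ballI impI)
        show "insert m Y' \<subseteq> S" using Y' m unfolding stable_def by auto
      next
        fix x y assume xy: "x \<in> insert m Y'" "y \<in> insert m Y'" "x \<noteq> y"
        have sub: "Y' \<subseteq> ?S" using Y' unfolding stable_def by auto
        show "\<not> (maj_pref n u y x \<and> uA x < uA y)"
        proof (cases "x = m")
          case True then show ?thesis using False xy by auto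
        next
          case xm: False
          show ?thesis
          proof (cases "y = m")
            case True
            then show ?thesis using mn xy xm sub by fastforce
          next
            case False
            then show ?thesis using Y' xy xm unfolding stable_def by auto
          qed
        qed
      next
        fix x assume "x \<in> S - insert m Y'"
        then show "\<exists>y\<in>insert m Y'. maj_pref n u y x \<and> uA x < uA y"
          using Y' unfolding stable_def by auto
      qed
      then show ?thesis by blast
    qed
  qed
qed

lemma stable_unique:
  fixes uA :: "'x \<Rightarrow> real"
  assumes fin: "finite X" and inj: "inj_on uA X" and s1: "stable X n u uA Y1" and s2: "stable X n u uA Y2"
  shows "Y1 = Y2"
proof -
  have key: "\<And>x. x \<in> X \<Longrightarrow> (x \<in> Y1 \<longleftrightarrow> x \<in> Y2)"
  proof -
    fix x show "x \<in> X \<Longrightarrow> (x \<in> Y1 \<longleftrightarrow> x \<in> Y2)"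
    proof (induction x rule: measure_induct_rule[of "\<lambda>x. card {z\<in>X. uA z > uA x}"])
      case (less x)
      have IH: "\<And>y. y \<in> X \<Longrightarrow> uA y > uA x \<Longrightarrow> (y \<in> Y1 \<longleftrightarrow> y \<in> Y2)"
      proof -
        fix y assume y: "y \<in> X" "uA y > uA x"
        have "{z\<in>X. uA z > uA y} \<subset> {z\<in>X. uA z > uA x}" using y by auto
        then have "card {z\<in>X. uA z > uA y} < card {z\<in>X. uA z > uA x}"
          using fin by (intro psubset_card_mono) auto
        then show "y \<in> Y1 \<longleftrightarrow> y \<in> Y2" using less y by blast
      qed
      show ?case
      proof
        assume x1: "x \<in> Y1"
        show "x \<in> Y2"
        proof (rule ccontr)
          assume "x \<notin> Y2"
          then have "x \<in> X - Y2" using less.prems by blast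
          then have "\<exists>y\<in>Y2. maj_pref n u y x \<and> uA x < uA y" using s2 unfolding stable_def by blast
          then obtain y where "y \<in> Y2" "maj_pref n u y x" "uA y > uA x" by blast
          moreover then have "y \<in> X" using s2 unfolding stable_def by auto
          ultimately show False using IH x1 s1 unfolding stable_def by fastforce
        qed
      next
        assume x1: "x \<in> Y2"
        show "x \<in> Y1"
        proof (rule ccontr)
          assume "x \<notin> Y1"
          then have "x \<in> X - Y1" using less.prems by blast
          then have "\<exists>y\<in>Y1. maj_pref n u y x \<and> uA x < uA y" using s1 unfolding stable_def by blast
          then obtain y where "y \<in> Y1" "maj_pref n u y x" "uA y > uA x" by blast
          moreover then have "y \<in> X" using s1 unfolding stable_def by auto
          ultimately show False using IH x1 s2 unfolding stable_def by fastforce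
        qed
      qed
    qed
  qed
  show ?thesis using key s1 s2 unfolding stable_def by blast
qed

theorem theorem8:
  fixes X :: "'x set" and n :: nat and u :: "nat \<Rightarrow> 'x \<Rightarrow> real" and uA :: "'x \<Rightarrow> real"
  assumes finX: "finite X"
    and odd_n: "odd n"
    and strict_voters: "\<And>i. i \<in> {1..n} \<Longrightarrow> inj_on (u i) X"
    and strict_setter: "inj_on uA X"
  shows "(\<forall>x0 \<in> X. \<forall>T T'. 1 \<le> T \<and> T < T' \<longrightarrow>
            U_T X n u uA T' x0 \<ge> U_T X n u uA T x0 \<and> U_T X n u uA T x0 \<ge> U_inf X n u uA x0)
     \<and> (let A = (\<exists>x0 \<in> X. \<forall>T \<ge> 2. U_T X n u uA T x0 > U_T X n u uA 1 x0
                                   \<and> U_T X n u uA 1 x0 > U_inf X n u uA x0);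
            B = (\<forall>x0 \<in> X. \<forall>T \<ge> 2. U_T X n u uA T x0 = U_T X n u uA 1 x0
                                   \<and> U_T X n u uA 1 x0 = U_inf X n u uA x0)
        in (A \<and> \<not> B) \<or> (\<not> A \<and> B))"
proof -
  obtain V where V: "stable X n u uA V" using stable_exists[OF finX strict_setter] by blast
  have SV: "stable_set X n u uA = V"
    unfolding stable_set_def
    by (rule the_equality[where P="stable X n u uA", OF V]) (rule stable_unique[OF finX strict_setter _ V])
  define p where "p = phi X n u uA"
  define q where "q = psi X n u uA V"
  have Uinf: "U_inf X n u uA x = uA (q x)" for x unfolding U_inf_def SV q_def by simp
  have UT: "U_T X n u uA T x = uA ((p ^^ T) x)" for T x unfolding U_T_def p_def by simp
  have pM: "x \<in> X \<Longrightarrow> p x \<in> Mset X n u x" for x using phi_props[OF finX strict_setter] p_def by blast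
  have pmax: "x \<in> X \<Longrightarrow> z \<in> Mset X n u x \<Longrightarrow> uA z \<le> uA (p x)" for x z
    using phi_props[OF finX strict_setter] p_def by blast
  have qM: "x \<in> X \<Longrightarrow> q x \<in> Mset X n u x \<inter> V" for x using psi_props[OF finX strict_setter _ V] q_def by blast
  have qmax: "x \<in> X \<Longrightarrow> z \<in> Mset X n u x \<inter> V \<Longrightarrow> uA z \<le> uA (q x)" for x z
    using psi_props[OF finX strict_setter _ V] q_def by blast
  have pX: "x \<in> X \<Longrightarrow> p x \<in> X" for x by (rule subsetD[OF Mset_sub pM])
  have pge: "x \<in> X \<Longrightarrow> uA x \<le> uA (p x)" for x by (rule pmax[OF _ Mset_self]) (assumption+)
  have iX: "x \<in> X \<Longrightarrow> (p ^^ T) x \<in> X" for x T by (induction T) (auto intro: pX)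
  have imono: "uA ((p ^^ T) x) \<le> uA ((p ^^ T') x)" if "x \<in> X" "T \<le> T'" for x T T'
    using that(2)
  proof (induction T' rule: dec_induct)
    case base then show ?case by simp
  next
    case (step k)
    have "uA ((p ^^ k) x) \<le> uA (p ((p ^^ k) x))" using pge iX that(1) by blast
    then show ?case using step by simp
  qed
  have q_le_p: "x \<in> X \<Longrightarrow> uA (q x) \<le> uA (p x)" for x using qM pmax by blast
  have part1: "\<forall>x0 \<in> X. \<forall>T T'. 1 \<le> T \<and> T < T' \<longrightarrow>
            U_T X n u uA T' x0 \<ge> U_T X n u uA T x0 \<and> U_T X n u uA T x0 \<ge> U_inf X n u uA x0"
  proof (intro ballI allI impI conjI)
    fix x0 and T T' :: nat assume x0: "x0 \<in> X" and TT: "1 \<le> T \<and> T < T'"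
    show "U_T X n u uA T' x0 \<ge> U_T X n u uA T x0" unfolding UT using imono x0 TT by simp
    have "uA (q x0) \<le> uA ((p ^^ 1) x0)" using q_le_p x0 by simp
    also have "\<dots> \<le> uA ((p ^^ T) x0)" using imono x0 TT by blast
    finally show "U_T X n u uA T x0 \<ge> U_inf X n u uA x0" unfolding UT Uinf .
  qed
  have dom_strict: "x \<in> X \<Longrightarrow> p x \<noteq> x \<Longrightarrow> maj_pref n u (p x) x \<and> uA x < uA (p x)" for x
  proof -
    assume x: "x \<in> X" "p x \<noteq> x"
    have "maj_pref n u (p x) x" using pM[OF x(1)] x(2) unfolding Mset_def by auto
    moreover have "uA x \<noteq> uA (p x)" using x pX strict_setter by (auto dest: inj_onD)
    ultimately show ?thesis using pge[OF x(1)] by simp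
  qed
  have Vsub: "V \<subseteq> X" using V unfolding stable_def by auto
  show ?thesis
  proof (cases "p ` X \<subseteq> V")
    case True
    have pfix: "y \<in> V \<Longrightarrow> p y = y" for y
    proof (rule ccontr)
      assume y: "y \<in> V" "p y \<noteq> y"
      have "y \<in> X" using y Vsub by auto
      then have d: "maj_pref n u (p y) y \<and> uA y < uA (p y)" and pyV: "p y \<in> V"
        using dom_strict y True by auto
      have H: "\<forall>x\<in>V. \<forall>y\<in>V. x \<noteq> y \<longrightarrow> \<not> (maj_pref n u y x \<and> uA y > uA x)"
        using V unfolding stable_def by blast
      have "y \<noteq> p y \<longrightarrow> \<not> (maj_pref n u (p y) y \<and> uA (p y) > uA y)"
        using bspec[OF bspec[OF H y(1)] pyV] .
      then show False using y(2) d by auto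
    qed
    have iter: "(p ^^ T) x = p x" if "x \<in> X" "1 \<le> T" for x T
      using that(2)
    proof (induction T rule: dec_induct)
      case base then show ?case by simp
    next
      case (step k)
      then show ?case using pfix True that(1) by auto
    qed
    have eqq: "x \<in> X \<Longrightarrow> uA (q x) = uA (p x)" for x
    proof -
      assume x: "x \<in> X"
      have "p x \<in> Mset X n u x \<inter> V" using pM x True by blast
      then have "uA (p x) \<le> uA (q x)" using qmax x by blast
      then show ?thesis using q_le_p[OF x] by simp
    qed
    have B: "\<forall>x0 \<in> X. \<forall>T \<ge> 2. U_T X n u uA T x0 = U_T X n u uA 1 x0
                                   \<and> U_T X n u uA 1 x0 = U_inf X n u uA x0"
      unfolding UT Uinf using iter eqq by simp
    have nA: "\<not> (\<exists>x0 \<in> X. \<forall>T \<ge> 2. U_T X n u uA T x0 > U_T X n u uA 1 x0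
                                   \<and> U_T X n u uA 1 x0 > U_inf X n u uA x0)"
    proof
      assume "\<exists>x0 \<in> X. \<forall>T \<ge> 2. U_T X n u uA T x0 > U_T X n u uA 1 x0
                                   \<and> U_T X n u uA 1 x0 > U_inf X n u uA x0"
      then obtain x0 where "x0 \<in> X" "U_T X n u uA 2 x0 > U_T X n u uA 1 x0" by auto
      then show False using B by auto
    qed
    show ?thesis unfolding Let_def using part1 B nA by blast
  next
    case False
    then obtain x where x: "x \<in> X" "p x \<notin> V" by auto
    have pxX: "p x \<in> X" using pX x by auto
    have "q x \<noteq> p x" using qM[OF x(1)] x by auto
    moreover have "q x \<in> X" using qM[OF x(1)] Vsub by auto
    ultimately have "uA (q x) \<noteq> uA (p x)" using pxX strict_setter by (auto dest: inj_onD)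
    then have lt1: "uA (q x) < uA (p x)" using q_le_p x by force
    have "p (p x) \<noteq> p x"
    proof
      assume fx: "p (p x) = p x"
      have "p x \<in> X - V" using x pxX by blast
      then have "\<exists>y\<in>V. maj_pref n u y (p x) \<and> uA (p x) < uA y" using V unfolding stable_def by blast
      then obtain y where y: "y \<in> V" "maj_pref n u y (p x)" "uA y > uA (p x)" by blast
      have "y \<in> Mset X n u (p x)" using y Vsub unfolding Mset_def by auto
      then have "uA y \<le> uA (p (p x))" using pmax pxX by blast
      then show False using fx y by simp
    qed
    then have lt2: "uA (p x) < uA (p (p x))" using dom_strict pxX by blast
    have A: "\<exists>x0 \<in> X. \<forall>T \<ge> 2. U_T X n u uA T x0 > U_T X n u uA 1 x0
                                   \<and> U_T X n u uA 1 x0 > U_inf X n u uA x0"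
    proof (intro bexI[OF _ x(1)] allI impI conjI)
      fix T :: nat assume T: "T \<ge> 2"
      have "uA ((p ^^ 2) x) \<le> uA ((p ^^ T) x)" using imono x T by blast
      then show "U_T X n u uA T x > U_T X n u uA 1 x" unfolding UT
        using lt2 by (simp add: numeral_2_eq_2)
      show "U_T X n u uA 1 x > U_inf X n u uA x" unfolding UT Uinf using lt1 by simp
    qed
    have nB: "\<not> (\<forall>x0 \<in> X. \<forall>T \<ge> 2. U_T X n u uA T x0 = U_T X n u uA 1 x0
                                   \<and> U_T X n u uA 1 x0 = U_inf X n u uA x0)"
    proof
      assume "\<forall>x0 \<in> X. \<forall>T \<ge> 2. U_T X n u uA T x0 = U_T X n u uA 1 x0
                                   \<and> U_T X n u uA 1 x0 = U_inf X n u uA x0"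
      moreover obtain x0 where "x0 \<in> X" "U_T X n u uA 2 x0 > U_T X n u uA 1 x0" using A by auto
      ultimately show False by auto
    qed
    show ?thesis unfolding Let_def using part1 A nB by blast
  qed
qed

end
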